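(* Let $V$ be a vertex algebra over a field $k$ of characteristic $0$ with translation operator $T$, and let $f\in k((x))$. Then for all $a,b\in V$, $$a_{(f(x))}b+b_{(f(-x))}a=\sum_{j\in\mathbb{Z}_+}\frac{(-1)^j}{(j+1)!}\,T^{j+1}\bigl(a_{(x^{j+1}f(x))}b\bigr).$$
   Context: For a vertex algebra $V$ with $n$-th products $a(n)b$ (so that $a(n)b=0$ for $n\gg0$), write $a(z)b=\sum_{n\in\mathbb{Z}}a(n)b\,z^{-n-1}\in V((z))$. For a Laurent series $f\in k((x))$ the $f$-product is $a_{(f)}b=\operatorname{res}_z f(z)a(z)b$, the coefficient of $z^{-1}$ in $f(z)a(z)b$; notation such as $a_{(x^{j}f(x))}b$ means the $f$-product with the series $x^jf(x)$. The translation operator is $Ta=a(-2)\mathbf{1}$. The sum on the right is finite. *)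

theory Defs
  imports Main "HOL-Computational_Algebra.Formal_Laurent_Series"
begin

definition fsum :: "('i \<Rightarrow> 'v::comm_monoid_add) \<Rightarrow> 'v" where
  "fsum g = sum g {i. g i \<noteq> 0}"

text \<open>Vertex algebra over the field 'k: a 'k-vector space 'v (scalar multiplication scale),
  bilinear n-th products nprod n a b = a(n)b for n in Z, vacuum vac, with
  truncation, vacuum axioms and the Borcherds identity.\<close>
definition vertex_algebra ::
  "('k::field_char_0 \<Rightarrow> 'v::ab_group_add \<Rightarrow> 'v) \<Rightarrow> (int \<Rightarrow> 'v \<Rightarrow> 'v \<Rightarrow> 'v) \<Rightarrow> 'v \<Rightarrow> bool" where
  "vertex_algebra scale nprod vac \<longleftrightarrow>
     Vector_Spaces.vector_space scale \<and>
     (\<forall>n a. Vector_Spaces.linear scale scale (\<lambda>b. nprod n a b)) \<and>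
     (\<forall>n b. Vector_Spaces.linear scale scale (\<lambda>a. nprod n a b)) \<and>
     (\<forall>a b. \<exists>N. \<forall>n\<ge>N. nprod n a b = 0) \<and>
     (\<forall>n a. nprod n vac a = (if n = -1 then a else 0)) \<and>
     (\<forall>n a. n \<ge> 0 \<longrightarrow> nprod n a vac = 0) \<and>
     (\<forall>a. nprod (-1) a vac = a) \<and>
     (\<forall>a b c m n k.
        fsum (\<lambda>j::nat. scale ((of_int m :: 'k) gchoose j)
                 (nprod (m + k - int j) (nprod (n + int j) a b) c))
      = fsum (\<lambda>j::nat. scale ((-1) ^ j * ((of_int n :: 'k) gchoose j))
                 (nprod (m + n - int j) a (nprod (k + int j) b c)
                  - scale ((-1) powi n) (nprod (n + k - int j) b (nprod (m + int j) a c)))))"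

definition transl :: "(int \<Rightarrow> 'v \<Rightarrow> 'v \<Rightarrow> 'v) \<Rightarrow> 'v \<Rightarrow> 'v \<Rightarrow> 'v" where
  "transl nprod vac a = nprod (-2) a vac"

text \<open>f-product: a_(f) b = res_z f(z) a(z)b = sum over i of f_i a(i)b, where f = sum_i f_i z^i
  and a(z)b = sum_n a(n)b z^(-n-1).\<close>
definition fprod :: "('k::field_char_0 \<Rightarrow> 'v::ab_group_add \<Rightarrow> 'v) \<Rightarrow> (int \<Rightarrow> 'v \<Rightarrow> 'v \<Rightarrow> 'v)
     \<Rightarrow> 'k fls \<Rightarrow> 'v \<Rightarrow> 'v \<Rightarrow> 'v" where
  "fprod scale nprod f a b = fsum (\<lambda>i::int. scale (fls_nth f i) (nprod i a b))"

end

theory Submission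
  imports Defs
begin

lemma fsum_eq_sum:
  assumes "finite S" "\<And>i. i \<notin> S \<Longrightarrow> g i = 0"
  shows "fsum g = sum g S"
proof -
  have sub: "{i. g i \<noteq> 0} \<subseteq> S" using assms(2) by blast
  show ?thesis unfolding fsum_def
    by (rule sum.mono_neutral_left[OF assms(1) sub]) auto
qed

lemma fsum_shift:
  fixes g :: "int \<Rightarrow> 'v::comm_monoid_add"
  shows "fsum (\<lambda>i. g (i + k)) = fsum g"
proof -
  have eq: "{i. g (i + k) \<noteq> 0} = (\<lambda>i. i - k) ` {i. g i \<noteq> 0}"
    by (auto simp: image_iff intro!: exI[of _ "_ + k"])
  have inj: "inj_on (\<lambda>i::int. i - k) A" for A by (auto simp: inj_on_def)
  show ?thesis unfolding fsum_def eq
    by (subst sum.reindex[OF inj]) (simp add: o_def)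
qed

context
  fixes scale :: "'k::field_char_0 \<Rightarrow> 'v::ab_group_add \<Rightarrow> 'v"
    and nprod :: "int \<Rightarrow> 'v \<Rightarrow> 'v \<Rightarrow> 'v"
    and vac :: 'v
  assumes VA: "vertex_algebra scale nprod vac"
begin

lemma vs: "Vector_Spaces.vector_space scale"
  using VA unfolding vertex_algebra_def by blast

interpretation vs: vector_space scale by (rule vs)

lemma lin2: "Vector_Spaces.linear scale scale (\<lambda>b. nprod n a b)"
  using VA unfolding vertex_algebra_def by blast
lemma lin1: "Vector_Spaces.linear scale scale (\<lambda>a. nprod n a b)"
  using VA unfolding vertex_algebra_def by blast
lemma trunc: "\<exists>N. \<forall>n\<ge>N. nprod n a b = 0"
  using VA unfolding vertex_algebra_def by blast
lemma vacl: "nprod n vac a = (if n = -1 then a else 0)"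
  using VA unfolding vertex_algebra_def by blast
lemma vacr: "n \<ge> 0 \<Longrightarrow> nprod n a vac = 0"
  using VA unfolding vertex_algebra_def by blast
lemma vacm1: "nprod (-1) a vac = a"
  using VA unfolding vertex_algebra_def by blast
lemma borch: "fsum (\<lambda>j::nat. scale ((of_int m :: 'k) gchoose j)
                 (nprod (m + k - int j) (nprod (n + int j) a b) c))
      = fsum (\<lambda>j::nat. scale ((-1) ^ j * ((of_int n :: 'k) gchoose j))
                 (nprod (m + n - int j) a (nprod (k + int j) b c)
                  - scale ((-1) powi n) (nprod (n + k - int j) b (nprod (m + int j) a c))))"
  using VA unfolding vertex_algebra_def by blast

lemma nprod_0r[simp]: "nprod n a 0 = 0"
proof -
  interpret L: Vector_Spaces.linear scale scale "\<lambda>b. nprod n a b" by (rule lin2)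
  show ?thesis by (rule L.zero)
qed

lemma nprod_0l[simp]: "nprod n 0 b = 0"
proof -
  interpret L: Vector_Spaces.linear scale scale "\<lambda>a. nprod n a b" by (rule lin1)
  show ?thesis by (rule L.zero)
qed

abbreviation "T \<equiv> transl nprod vac"

lemma T_lin: "Vector_Spaces.linear scale scale T"
  unfolding transl_def[abs_def] by (rule lin1)

lemma Tpow_lin: "Vector_Spaces.linear scale scale (T ^^ k)"
proof (induction k)
  case 0 show ?case using vs.linear_id by (simp add: id_def)
next
  case (Suc k)
  show ?case unfolding funpow.simps(2) by (rule Vector_Spaces.linear_compose[OF Suc T_lin])
qed

lemma Tpow_0[simp]: "(T ^^ k) 0 = 0"
proof -
  interpret L: Vector_Spaces.linear scale scale "T ^^ k" by (rule Tpow_lin)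
  show ?thesis by (rule L.zero)
qed

lemma T_0[simp]: "T 0 = 0" by (simp add: transl_def)

lemma vac_step: "nprod (-1 - int p) (T x) vac = scale (1 + of_nat p) (nprod (-2 - int p) x vac)"
proof -
  note B = borch[of "- int p" "-1" "-2" x vac vac]
  have L: "fsum (\<lambda>j::nat. scale ((of_int (- int p) :: 'k) gchoose j)
                 (nprod (- int p + -1 - int j) (nprod (-2 + int j) x vac) vac))
     = nprod (-1 - int p) (T x) vac + scale (- of_nat p) (nprod (-2 - int p) x vac)"
  proof -
    have "fsum (\<lambda>j::nat. scale ((of_int (- int p) :: 'k) gchoose j)
                 (nprod (- int p + -1 - int j) (nprod (-2 + int j) x vac) vac))
       = sum (\<lambda>j::nat. scale ((of_int (- int p) :: 'k) gchoose j)
                 (nprod (- int p + -1 - int j) (nprod (-2 + int j) x vac) vac)) {0,1}"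
      by (rule fsum_eq_sum) (auto simp: vacr)
    also have "\<dots> = nprod (-1 - int p) (T x) vac + scale (- of_nat p) (nprod (-2 - int p) x vac)"
      by (simp add: transl_def vacm1 algebra_simps) (smt (verit))
    finally show ?thesis .
  qed
  have R: "fsum (\<lambda>j::nat. scale ((-1) ^ j * ((of_int (-2) :: 'k) gchoose j))
                 (nprod (- int p + -2 - int j) x (nprod (-1 + int j) vac vac)
                  - scale ((-1) powi (-2)) (nprod (-2 + -1 - int j) vac (nprod (- int p + int j) x vac))))
      = nprod (-2 - int p) x vac"
  proof -
    have "fsum (\<lambda>j::nat. scale ((-1) ^ j * ((of_int (-2) :: 'k) gchoose j))
                 (nprod (- int p + -2 - int j) x (nprod (-1 + int j) vac vac)
                  - scale ((-1) powi (-2)) (nprod (-2 + -1 - int j) vac (nprod (- int p + int j) x vac))))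
       = sum (\<lambda>j::nat. scale ((-1) ^ j * ((of_int (-2) :: 'k) gchoose j))
                 (nprod (- int p + -2 - int j) x (nprod (-1 + int j) vac vac)
                  - scale ((-1) powi (-2)) (nprod (-2 + -1 - int j) vac (nprod (- int p + int j) x vac)))) {0}"
      by (rule fsum_eq_sum) (auto simp: vacl)
    also have "\<dots> = nprod (-2 - int p) x vac"
      by (simp add: vacl algebra_simps) (smt (verit))
    finally show ?thesis .
  qed
  from B L R have "nprod (-1 - int p) (T x) vac + scale (- of_nat p) (nprod (-2 - int p) x vac)
     = nprod (-2 - int p) x vac" by simp
  then have "nprod (-1 - int p) (T x) vac = nprod (-2 - int p) x vac - scale (- of_nat p) (nprod (-2 - int p) x vac)"
    by (simp add: algebra_simps)
  also have "\<dots> = scale (1 + of_nat p) (nprod (-2 - int p) x vac)"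
    by (simp add: vs.scale_left_distrib vs.scale_minus_left)
  finally show ?thesis .
qed

lemma vac_T: "nprod (-1 - int j) x vac = scale (1 / fact j) ((T ^^ j) x)"
proof (induction j arbitrary: x)
  case 0 then show ?case by (simp add: vacm1)
next
  case (Suc j)
  have ne: "(1 + of_nat j :: 'k) \<noteq> 0"
    by (metis of_nat_Suc of_nat_eq_0_iff nat.distinct(1))
  have "nprod (-1 - int (Suc j)) x vac = nprod (-2 - int j) x vac"
    by (rule arg_cong[where f="\<lambda>n. nprod n x vac"]) simp
  also have "\<dots> = scale (1 / (1 + of_nat j)) (scale (1 + of_nat j) (nprod (-2 - int j) x vac))"
    using ne by (simp add: vs.scale_scale)
  also have "\<dots> = scale (1 / (1 + of_nat j)) (nprod (-1 - int j) (T x) vac)"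
    by (simp add: vac_step)
  also have "\<dots> = scale (1 / (1 + of_nat j)) (scale (1 / fact j) ((T ^^ j) (T x)))"
    by (simp add: Suc.IH)
  also have "\<dots> = scale (1 / fact (Suc j)) ((T ^^ Suc j) x)"
    by (simp add: vs.scale_scale funpow_swap1 field_simps)
  finally show ?case .
qed

lemma gchoose_m1: "((-1::'k) gchoose j) = (-1) ^ j"
  using gbinomial_minus[of "1::'k" j] by (simp add: binomial_gbinomial[symmetric])

lemma skew: "nprod n a b + scale ((-1) powi n) (nprod n b a)
   = fsum (\<lambda>j::nat. scale ((-1) ^ j / fact (j + 1)) ((T ^^ (j + 1)) (nprod (n + 1 + int j) a b)))"
proof -
  note B = borch[of "-1" "-1" "n + 1" a b vac]
  have L: "(\<lambda>j::nat. scale ((of_int (-1) :: 'k) gchoose j)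
                 (nprod (-1 + -1 - int j) (nprod (n + 1 + int j) a b) vac))
     = (\<lambda>j::nat. scale ((-1) ^ j / fact (j + 1)) ((T ^^ (j + 1)) (nprod (n + 1 + int j) a b)))"
  proof
    fix j :: nat
    have "nprod (-1 + -1 - int j) (nprod (n + 1 + int j) a b) vac
        = nprod (-1 - int (j + 1)) (nprod (n + 1 + int j) a b) vac"
      by (rule arg_cong[where f="\<lambda>m. nprod m _ vac"]) simp
    also have "\<dots> = scale (1 / fact (j + 1)) ((T ^^ (j + 1)) (nprod (n + 1 + int j) a b))"
      by (rule vac_T)
    finally show "scale ((of_int (-1) :: 'k) gchoose j)
                 (nprod (-1 + -1 - int j) (nprod (n + 1 + int j) a b) vac)
       = scale ((-1) ^ j / fact (j + 1)) ((T ^^ (j + 1)) (nprod (n + 1 + int j) a b))"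
      by (simp add: gchoose_m1 vs.scale_scale)
  qed
  have R: "fsum (\<lambda>j::nat. scale ((-1) ^ j * ((of_int (n + 1) :: 'k) gchoose j))
                 (nprod (-1 + (n + 1) - int j) a (nprod (-1 + int j) b vac)
                  - scale ((-1) powi (n + 1)) (nprod (n + 1 + -1 - int j) b (nprod (-1 + int j) a vac))))
      = nprod n a b + scale ((-1) powi n) (nprod n b a)"
  proof -
    have "fsum (\<lambda>j::nat. scale ((-1) ^ j * ((of_int (n + 1) :: 'k) gchoose j))
                 (nprod (-1 + (n + 1) - int j) a (nprod (-1 + int j) b vac)
                  - scale ((-1) powi (n + 1)) (nprod (n + 1 + -1 - int j) b (nprod (-1 + int j) a vac))))
       = sum (\<lambda>j::nat. scale ((-1) ^ j * ((of_int (n + 1) :: 'k) gchoose j))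
                 (nprod (-1 + (n + 1) - int j) a (nprod (-1 + int j) b vac)
                  - scale ((-1) powi (n + 1)) (nprod (n + 1 + -1 - int j) b (nprod (-1 + int j) a vac)))) {0}"
      by (rule fsum_eq_sum) (auto simp: vacr)
    also have "\<dots> = nprod n a b - scale ((-1) powi (n + 1)) (nprod n b a)"
      by (simp add: vacm1)
    also have "\<dots> = nprod n a b + scale ((-1) powi n) (nprod n b a)"
    proof -
      have "(-1::'k) powi (n + 1) = - ((-1) powi n)"
        by (simp add: power_int_add)
      then show ?thesis by (simp add: vs.scale_minus_left)
    qed
    finally show ?thesis .
  qed
  show ?thesis using B L R by simp
qed

lemma Tpow_sum: "(T ^^ k) (sum g S) = (\<Sum>i\<in>S. (T ^^ k) (g i))"
proof -
  interpret L: Vector_Spaces.linear scale scale "T ^^ k" by (rule Tpow_lin)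
  show ?thesis by (rule L.sum)
qed

lemma Tpow_scale: "(T ^^ k) (scale c x) = scale c ((T ^^ k) x)"
proof -
  interpret L: Vector_Spaces.linear scale scale "T ^^ k" by (rule Tpow_lin)
  show ?thesis by (rule L.scale)
qed

lemma main:
  fixes f :: "'k fls" and a b :: 'v
  shows "fprod scale nprod f a b + fprod scale nprod (fls_compose_fps f (- fps_X)) b a
       = fsum (\<lambda>j::nat. scale ((-1) ^ j / fact (j + 1))
            ((T ^^ (j + 1)) (fprod scale nprod (fls_X ^ (j + 1) * f) a b)))"
proof -
  define c where "c i = fls_nth f i" for i
  define d where "d = fls_subdegree f"
  define s :: "nat \<Rightarrow> 'k" where "s j = (-1) ^ j / fact (j + 1)" for j
  obtain N1 where N1: "\<And>n. n \<ge> N1 \<Longrightarrow> nprod n a b = 0" using trunc[of a b] by blast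
  obtain N2 where N2: "\<And>n. n \<ge> N2 \<Longrightarrow> nprod n b a = 0" using trunc[of b a] by blast
  define N where "N = max N1 N2"
  define I where "I = {d..N}"
  define J where "J = {0..nat (N - d)}"
  have cz: "c i = 0" if "i < d" for i using that by (simp add: c_def d_def)
  have ab0: "nprod n a b = 0" if "n > N" for n using that N1 by (simp add: N_def)
  have ba0: "nprod n b a = 0" if "n > N" for n using that N2 by (simp add: N_def)
  have finI: "finite I" and finJ: "finite J" by (simp_all add: I_def J_def)
  have notI: "i < d \<or> i > N" if "i \<notin> I" for i using that by (auto simp: I_def)
  have inI: "d \<le> i" if "i \<in> I" for i using that by (auto simp: I_def)
  have notJ: "int j > N - d" if "j \<notin> J" for j using that by (auto simp: J_def)

  have E1: "fprod scale nprod f a b = (\<Sum>i\<in>I. scale (c i) (nprod i a b))"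
    unfolding fprod_def c_def[symmetric]
    by (rule fsum_eq_sum[OF finI]) (use notI cz ab0 in fastforce)
  have cf: "fls_nth (fls_compose_fps f (- fps_X)) i = c i * (-1) powi i" for i
  proof -
    have eq: "fps_const (-1::'k) * fps_X = - fps_X" by (simp add: fps_const_neg fps_const_1_eq_1)
    show ?thesis using fls_nth_fls_compose_fps_linear[of "-1" f i] unfolding eq by (simp add: c_def)
  qed
  have E2: "fprod scale nprod (fls_compose_fps f (- fps_X)) b a
      = (\<Sum>i\<in>I. scale (c i * (-1) powi i) (nprod i b a))"
    unfolding fprod_def cf
    by (rule fsum_eq_sum[OF finI]) (use notI cz ba0 in fastforce)
  have E3: "nprod i a b + scale ((-1) powi i) (nprod i b a)
      = (\<Sum>j\<in>J. scale (s j) ((T ^^ (j + 1)) (nprod (i + 1 + int j) a b)))" if "i \<in> I" for i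
    unfolding skew s_def
  proof (rule fsum_eq_sum[OF finJ])
    fix j assume "j \<notin> J"
    then have "int j > N - d" by (rule notJ)
    with inI[OF that] have "nprod (i + 1 + int j) a b = 0" by (intro ab0) simp
    then show "scale ((- 1) ^ j / fact (j + 1)) ((T ^^ (j + 1)) (nprod (i + 1 + int j) a b)) = 0"
      by simp
  qed
  have E4: "fprod scale nprod (fls_X ^ (j + 1) * f) a b
      = (\<Sum>i\<in>I. scale (c i) (nprod (i + 1 + int j) a b))" for j
  proof -
    have "fprod scale nprod (fls_X ^ (j + 1) * f) a b
        = fsum (\<lambda>i. scale (c (i - int (j + 1))) (nprod i a b))"
      unfolding fprod_def fls_X_power_times_conv_shift(1) by (simp add: c_def algebra_simps)
    also have "\<dots> = fsum (\<lambda>i. scale (c (i + int (j + 1) - int (j + 1))) (nprod (i + int (j + 1)) a b))"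
      by (rule fsum_shift[symmetric, where g = "\<lambda>i. scale (c (i - int (j + 1))) (nprod i a b)"])
    also have "\<dots> = fsum (\<lambda>i. scale (c i) (nprod (i + 1 + int j) a b))"
      by (simp add: algebra_simps)
    also have "\<dots> = (\<Sum>i\<in>I. scale (c i) (nprod (i + 1 + int j) a b))"
      by (rule fsum_eq_sum[OF finI]) (use notI cz ab0 in fastforce)
    finally show ?thesis .
  qed
  have E5: "fsum (\<lambda>j::nat. scale (s j) ((T ^^ (j + 1)) (fprod scale nprod (fls_X ^ (j + 1) * f) a b)))
      = (\<Sum>j\<in>J. scale (s j) ((T ^^ (j + 1)) (\<Sum>i\<in>I. scale (c i) (nprod (i + 1 + int j) a b))))"
    unfolding E4
  proof (rule fsum_eq_sum[OF finJ])
    fix j assume "j \<notin> J"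
    then have "int j > N - d" by (rule notJ)
    then have "(\<Sum>i\<in>I. scale (c i) (nprod (i + 1 + int j) a b)) = 0"
      using inI ab0 by (intro sum.neutral) fastforce
    then show "scale (s j) ((T ^^ (j + 1)) (\<Sum>i\<in>I. scale (c i) (nprod (i + 1 + int j) a b))) = 0"
      by simp
  qed
  have "fprod scale nprod f a b + fprod scale nprod (fls_compose_fps f (- fps_X)) b a
      = (\<Sum>i\<in>I. scale (c i) (nprod i a b + scale ((-1) powi i) (nprod i b a)))"
    unfolding E1 E2 by (simp add: sum.distrib vs.scale_right_distrib vs.scale_scale)
  also have "\<dots> = (\<Sum>i\<in>I. \<Sum>j\<in>J. scale (c i) (scale (s j) ((T ^^ (j + 1)) (nprod (i + 1 + int j) a b))))"
    by (intro sum.cong refl) (simp add: E3 vs.scale_sum_right)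
  also have "\<dots> = (\<Sum>j\<in>J. \<Sum>i\<in>I. scale (s j) (scale (c i) ((T ^^ (j + 1)) (nprod (i + 1 + int j) a b))))"
    by (subst sum.swap) (simp add: vs.scale_scale mult.commute)
  also have "\<dots> = (\<Sum>j\<in>J. scale (s j) ((T ^^ (j + 1)) (\<Sum>i\<in>I. scale (c i) (nprod (i + 1 + int j) a b))))"
    by (simp only: Tpow_sum Tpow_scale vs.scale_sum_right vs.scale_scale)
  also have "\<dots> = fsum (\<lambda>j::nat. scale (s j) ((T ^^ (j + 1)) (fprod scale nprod (fls_X ^ (j + 1) * f) a b)))"
    by (rule E5[symmetric])
  finally show ?thesis by (simp add: s_def)
qed

end

theorem lemma2p1:
  fixes scale :: "'k::field_char_0 \<Rightarrow> 'v::ab_group_add \<Rightarrow> 'v"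
    and nprod :: "int \<Rightarrow> 'v \<Rightarrow> 'v \<Rightarrow> 'v"
    and vac :: 'v
    and f :: "'k fls"
    and a b :: 'v
  assumes "vertex_algebra scale nprod vac"
  shows "fprod scale nprod f a b + fprod scale nprod (fls_compose_fps f (- fps_X)) b a
       = fsum (\<lambda>j::nat. scale ((-1) ^ j / fact (j + 1))
            ((transl nprod vac ^^ (j + 1)) (fprod scale nprod (fls_X ^ (j + 1) * f) a b)))"
  by (rule main[OF assms])

end
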